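(* Fix $\alpha\in(0,1)$. For every $\rho\in[0,\infty)^{\mathcal E}$ with $f=\mu(\rho)\in\mathcal F$, and every $\pi\in\Pi$, $$\nabla_\rho W(\rho,\pi)'H(f,\pi)=\sum_{v=0}^{n-1}\alpha^v\sum_{e\in\mathcal E_v^+}\sigma_e H_e(f,\pi)\le-(1-\alpha)V(f,\pi),$$ where the gradient is computed with the convention $\frac{d}{dx}|x|=\mathrm{sgn}(x)$ for all $x$ (including $x=0$).
   Context: $\mathcal G=(\mathcal V,\mathcal E)$ is a finite directed graph with $\mathcal V=\{0,1,\dots,n\}$, containing no directed cycle, in which node $0$ is the unique node with no incoming link, node $n$ is the unique node with no outgoing link, there is a directed path from every node to $n$, and every link $(u,v)\in\mathcal E$ satisfies $u<v$. For $v\in\mathcal V$, $\mathcal E_v^-$ and $\mathcal E_v^+$ are the sets of links entering and leaving $v$. Each link $e$ has a flow-density function $\mu_e:[0,\infty)\to[0,\infty)$ that is continuously differentiable, strictly increasing, strictly concave, with $\mu_e(0)=0$ and $\mu_e'(0)<\infty$; $C_e:=\lim_{\rho\to\infty}\mu_e(\rho)\in(0,+\infty]$; $\mathcal F_v:=\prod_{e\in\mathcal E_v^+}[0,C_e)$, $\mathcal F:=\prod_{e\in\mathcal E}[0,C_e)$, $\mu(\rho):=(\mu_e(\rho_e))_e$. $\mathcal P$ is the set of directed paths from $0$ to $n$, $A$ the link-path incidence matrix ($A_{ep}=1$ iff $e\in p$), $\mathcal S(\cdot)$ denotes a probability simplex, $\Pi:=\{\pi\in\mathcal S(\mathcal P):(A\pi)_e<C_e\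 \forall e\}$, $f^\pi:=A\pi$, $\rho^\pi_e:=\mu_e^{-1}(f^\pi_e)$. For each $v\in\{0,\dots,n-1\}$ a continuously differentiable $G^v:\mathcal F_v\times\Pi\to\mathcal S(\mathcal E_v^+)$ is given such that (consistency) $(\sum_{j\in\mathcal E_v^+}f^\pi_j)\,G^v_e(f^\pi_{\mathcal E_v^+},\pi)=f^\pi_e$ for all $\pi\in\Pi$, $e\in\mathcal E_v^+$; and (cooperativity) $\partial G^v_j(f_{\mathcal E_v^+},\pi)/\partial f_e\ge0$ for all $\pi\in\Pi$, $f_{\mathcal E_v^+}\in\mathcal F_v$, $j\neq e\in\mathcal E_v^+$. For $f\in\mathcal F$, $\pi\in\Pi$, $e\in\mathcal E_v^+$: $H_e(f,\pi):=G^v_e(f_{\mathcal E_v^+},\pi)-f_e$ if $v=0$, and $H_e(f,\pi):=(\sum_{j\in\mathcal E_v^-}f_j)G^v_e(f_{\mathcal E_v^+},\pi)-f_e$ if $1\le v<n$. Notation: $\sigma_e:=\mathrm{sgn}(f_e-f^\pi_e)=\mathrm{sgn}(\rho_e-\rho^\pi_e)$ ($\mathrm{sgn}(0)=0$); $V(f,\pi):=\sum_{v=0}^{n-1}\alpha^v\sum_{e\in\mathcal E_v^+}|f_e-f^\pi_e|$; $W(\rho,\pi):=\sum_{v=0}^{n-1}\alpha^v\sum_{e\in\mathcal E_v^+}|\rho_e-\rho^\pi_e|$. *)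

theory Defs
  imports "HOL-Analysis.Analysis"
begin

(* Graph: nodes {0..n}, links are pairs (u,v) :: nat \<times> nat. *)

definition out_edges :: "(nat \<times> nat) set \<Rightarrow> nat \<Rightarrow> (nat \<times> nat) set" where
  "out_edges E v = {e \<in> E. fst e = v}"

definition in_edges :: "(nat \<times> nat) set \<Rightarrow> nat \<Rightarrow> (nat \<times> nat) set" where
  "in_edges E v = {e \<in> E. snd e = v}"

definition is_dpath :: "(nat \<times> nat) set \<Rightarrow> nat \<Rightarrow> (nat \<times> nat) list \<Rightarrow> bool" where
  "is_dpath E n p \<longleftrightarrow> p \<noteq> [] \<and> set p \<subseteq> E \<and> fst (hd p) = 0 \<and> snd (last p) = n \<and>
     (\<forall>i. Suc i < length p \<longrightarrow> snd (p ! i) = fst (p ! Suc i))"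

definition paths :: "(nat \<times> nat) set \<Rightarrow> nat \<Rightarrow> (nat \<times> nat) list set" where
  "paths E n = {p. is_dpath E n p}"

definition flow_of :: "(nat \<times> nat) set \<Rightarrow> nat \<Rightarrow> ((nat \<times> nat) list \<Rightarrow> real) \<Rightarrow> nat \<times> nat \<Rightarrow> real" where
  "flow_of E n \<pi> e = (\<Sum>p\<in>paths E n. if e \<in> set p then \<pi> p else 0)"

definition Pi_set :: "(nat \<times> nat) set \<Rightarrow> nat \<Rightarrow> (nat \<times> nat \<Rightarrow> ereal) \<Rightarrow> ((nat \<times> nat) list \<Rightarrow> real) set" where
  "Pi_set E n C = {\<pi>. (\<forall>p. 0 \<le> \<pi> p) \<and> (\<forall>p. p \<notin> paths E n \<longrightarrow> \<pi> p = 0) \<and>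
      sum \<pi> (paths E n) = 1 \<and> (\<forall>e\<in>E. ereal (flow_of E n \<pi> e) < C e)}"

definition Fv :: "(nat \<times> nat) set \<Rightarrow> (nat \<times> nat \<Rightarrow> ereal) \<Rightarrow> nat \<Rightarrow> (nat \<times> nat \<Rightarrow> real) set" where
  "Fv E C v = {f. (\<forall>e\<in>out_edges E v. 0 \<le> f e \<and> ereal (f e) < C e) \<and>
                  (\<forall>e. e \<notin> out_edges E v \<longrightarrow> f e = 0)}"

definition Fall :: "(nat \<times> nat) set \<Rightarrow> (nat \<times> nat \<Rightarrow> ereal) \<Rightarrow> (nat \<times> nat \<Rightarrow> real) set" where
  "Fall E C = {f. \<forall>e\<in>E. 0 \<le> f e \<and> ereal (f e) < C e}"

definition restr :: "(nat \<times> nat) set \<Rightarrow> nat \<Rightarrow> (nat \<times> nat \<Rightarrow> real) \<Rightarrow> nat \<times> nat \<Rightarrow> real" where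
  "restr E v f = (\<lambda>e. if e \<in> out_edges E v then f e else 0)"

definition Hfun :: "(nat \<times> nat) set
   \<Rightarrow> (nat \<Rightarrow> (nat \<times> nat \<Rightarrow> real) \<Rightarrow> ((nat \<times> nat) list \<Rightarrow> real) \<Rightarrow> nat \<times> nat \<Rightarrow> real)
   \<Rightarrow> (nat \<times> nat \<Rightarrow> real) \<Rightarrow> ((nat \<times> nat) list \<Rightarrow> real) \<Rightarrow> nat \<times> nat \<Rightarrow> real" where
  "Hfun E G f \<pi> e = (let v = fst e in
     if v = 0 then G v (restr E v f) \<pi> e - f e
     else (\<Sum>j\<in>in_edges E v. f j) * G v (restr E v f) \<pi> e - f e)"

definition rho_pi :: "(nat \<times> nat) set \<Rightarrow> nat \<Rightarrow> (nat \<times> nat \<Rightarrow> real \<Rightarrow> real)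
   \<Rightarrow> ((nat \<times> nat) list \<Rightarrow> real) \<Rightarrow> nat \<times> nat \<Rightarrow> real" where
  "rho_pi E n \<mu> \<pi> e = the_inv_into {0..} (\<mu> e) (flow_of E n \<pi> e)"

definition sigma :: "(nat \<times> nat) set \<Rightarrow> nat \<Rightarrow> (nat \<times> nat \<Rightarrow> real \<Rightarrow> real)
   \<Rightarrow> (nat \<times> nat \<Rightarrow> real) \<Rightarrow> ((nat \<times> nat) list \<Rightarrow> real) \<Rightarrow> nat \<times> nat \<Rightarrow> real" where
  "sigma E n \<mu> \<rho> \<pi> e = sgn (\<rho> e - rho_pi E n \<mu> \<pi> e)"

definition Vfun :: "real \<Rightarrow> (nat \<times> nat) set \<Rightarrow> nat \<Rightarrow> (nat \<times> nat \<Rightarrow> real)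
   \<Rightarrow> ((nat \<times> nat) list \<Rightarrow> real) \<Rightarrow> real" where
  "Vfun \<alpha> E n f \<pi> = (\<Sum>v<n. \<alpha> ^ v * (\<Sum>e\<in>out_edges E v. \<bar>f e - flow_of E n \<pi> e\<bar>))"

definition Wfun :: "real \<Rightarrow> (nat \<times> nat) set \<Rightarrow> nat \<Rightarrow> (nat \<times> nat \<Rightarrow> real \<Rightarrow> real)
   \<Rightarrow> (nat \<times> nat \<Rightarrow> real) \<Rightarrow> ((nat \<times> nat) list \<Rightarrow> real) \<Rightarrow> real" where
  "Wfun \<alpha> E n \<mu> \<rho> \<pi> = (\<Sum>v<n. \<alpha> ^ v * (\<Sum>e\<in>out_edges E v. \<bar>\<rho> e - rho_pi E n \<mu> \<pi> e\<bar>))"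

(* Component e (with tail v) of grad_rho W(rho,pi), computed with the convention
   d/dx |x| = sgn x for all x: the only term of W depending on rho_e is
   alpha^v |rho_e - rho^pi_e|. *)
definition Wgrad :: "real \<Rightarrow> (nat \<times> nat) set \<Rightarrow> nat \<Rightarrow> (nat \<times> nat \<Rightarrow> real \<Rightarrow> real)
   \<Rightarrow> (nat \<times> nat \<Rightarrow> real) \<Rightarrow> ((nat \<times> nat) list \<Rightarrow> real) \<Rightarrow> nat \<times> nat \<Rightarrow> real" where
  "Wgrad \<alpha> E n \<mu> \<rho> \<pi> e = \<alpha> ^ (fst e) * sgn (\<rho> e - rho_pi E n \<mu> \<pi> e)"

end

theory Submission
  imports Defs
begin


lemma mono1:
  fixes \<psi> :: "real \<Rightarrow> real"
  assumes conv: "\<And>x y z. x\<in>I \<Longrightarrow> z\<in>I \<Longrightarrow> x\<le>y \<Longrightarrow> y\<le>z \<Longrightarrow> y\<in>I"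
    and der: "\<And>x. x\<in>I \<Longrightarrow> \<exists>D\<ge>0. (\<psi> has_real_derivative D) (at x within I)"
    and lo: "lo\<in>I" and hi: "hi\<in>I" and le: "lo\<le>hi"
  shows "\<psi> lo \<le> \<psi> hi"
proof -
  have sub: "{lo..hi} \<subseteq> I"
  proof
    fix y assume "y \<in> {lo..hi}"
    then show "y \<in> I" using conv[OF lo hi] by simp
  qed
  have "\<forall>x\<in>I. continuous (at x within I) \<psi>"
  proof
    fix x assume "x \<in> I"
    then obtain D where "(\<psi> has_real_derivative D) (at x within I)" using der by blast
    then show "continuous (at x within I) \<psi>" by (rule DERIV_continuous)
  qed
  hence "continuous_on I \<psi>" unfolding continuous_on_eq_continuous_within .
  hence c: "continuous_on {lo..hi} \<psi>" by (rule continuous_on_subset) (rule sub)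
  show ?thesis
  proof (rule DERIV_nonneg_imp_increasing_open[OF le _ c])
    fix x assume x: "lo < x" "x < hi"
    then have "x \<in> I" using sub by auto
    then obtain D where D: "D\<ge>0" "(\<psi> has_real_derivative D) (at x within I)" using der by blast
    have s2: "{lo<..<hi} \<subseteq> I" using sub by auto
    have "(\<psi> has_real_derivative D) (at x within {lo<..<hi})"
      by (rule DERIV_subset[OF D(2) s2])
    then have "DERIV \<psi> x :> D" using at_within_open[of x "{lo<..<hi}"] x by simp
    then show "\<exists>y. DERIV \<psi> x :> y \<and> y \<ge> 0" using D by blast
  qed
qed

lemma sum_deriv_nonneg:
  fixes \<Gamma> :: "'e \<Rightarrow> real \<Rightarrow> real"
  assumes "\<And>j. j\<in>K \<Longrightarrow> \<exists>D\<ge>0. (\<Gamma> j has_real_derivative D) F"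
  shows "\<exists>D\<ge>0. ((\<lambda>x. \<Sum>j\<in>K. \<Gamma> j x) has_real_derivative D) F"
proof -
  have "\<forall>j\<in>K. \<exists>D. 0 \<le> D \<and> (\<Gamma> j has_real_derivative D) F" using assms by blast
  then obtain Df where Df: "\<forall>j\<in>K. 0 \<le> Df j \<and> (\<Gamma> j has_real_derivative Df j) F"
    by (rule bchoice[THEN exE])
  have "((\<lambda>x. \<Sum>j\<in>K. \<Gamma> j x) has_real_derivative sum Df K) F"
    by (rule DERIV_sum) (use Df in auto)
  moreover have "sum Df K \<ge> 0" using Df by (simp add: sum_nonneg)
  ultimately show ?thesis by blast
qed



lemma coord_mono:
  fixes \<Gamma> :: "'e \<Rightarrow> ('e \<Rightarrow> real) \<Rightarrow> real"
  assumes finO: "finite Ou"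
    and F_char: "\<And>h. h \<in> F \<longleftrightarrow> (\<forall>e\<in>Ou. h e \<in> I e) \<and> (\<forall>e. e\<notin>Ou \<longrightarrow> h e = 0)"
    and conv: "\<And>e x y z. x\<in>I e \<Longrightarrow> z\<in>I e \<Longrightarrow> x\<le>y \<Longrightarrow> y\<le>z \<Longrightarrow> y\<in>I e"
    and sum1: "\<And>h. h\<in>F \<Longrightarrow> (\<Sum>j\<in>Ou. \<Gamma> j h) = 1"
    and der: "\<And>h j e. h\<in>F \<Longrightarrow> j\<in>Ou \<Longrightarrow> e\<in>Ou \<Longrightarrow> j\<noteq>e \<Longrightarrow>
       \<exists>D\<ge>0. ((\<lambda>x. \<Gamma> j (h(e:=x))) has_real_derivative D) (at (h e) within I e)"
    and JO: "J \<subseteq> Ou"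
    and aF: "a\<in>F" and bF: "b\<in>F" and hJ: "\<forall>e\<in>J. a e \<le> b e" and hO: "\<forall>e\<in>Ou-J. b e \<le> a e"
  shows "(\<Sum>j\<in>J. \<Gamma> j b) \<le> (\<Sum>j\<in>J. \<Gamma> j a)"
proof -
  have psi_mono: "\<psi> lo \<le> \<psi> hi"
    if cF: "c\<in>F" and eO: "e\<in>Ou" and KO: "K \<subseteq> Ou" and eK: "e\<notin>K" and lo: "lo \<in> I e" and hi: "hi \<in> I e"
      and le: "lo \<le> hi" and psi: "\<psi> = (\<lambda>x. \<Sum>j\<in>K. \<Gamma> j (c(e:=x)))" for c e K lo hi \<psi>
  proof (rule mono1[OF conv _ lo hi le])
    fix x assume x: "x \<in> I e"
    have hF: "c(e:=x) \<in> F" using cF x eO unfolding F_char by auto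
    show "\<exists>D\<ge>0. (\<psi> has_real_derivative D) (at x within I e)"
      unfolding psi
    proof (rule sum_deriv_nonneg)
      fix j assume j: "j \<in> K"
      have "j \<noteq> e" using j eK by auto
      from der[OF hF _ eO this] j KO
      show "\<exists>D\<ge>0. ((\<lambda>xa. \<Gamma> j (c(e := xa))) has_real_derivative D) (at x within I e)"
        by auto
    qed
  qed
  have step: "(\<Sum>j\<in>J. \<Gamma> j (c(e:=y))) \<le> (\<Sum>j\<in>J. \<Gamma> j c)"
    if cF: "c\<in>F" and eO: "e\<in>Ou" and y: "y \<in> I e" and h1: "e\<in>J \<longrightarrow> c e \<le> y"
      and h2: "e\<notin>J \<longrightarrow> y \<le> c e" for c e y
  proof (cases "e \<in> J")
    case False
    have ce: "c e \<in> I e" using cF eO F_char by auto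
    have "(\<Sum>j\<in>J. \<Gamma> j (c(e:=y))) \<le> (\<Sum>j\<in>J. \<Gamma> j (c(e:=c e)))"
      by (rule psi_mono[OF cF eO JO False y ce _ refl]) (use h2 False in auto)
    then show ?thesis by simp
  next
    case True
    have ce: "c e \<in> I e" using cF eO F_char by auto
    have m: "(\<Sum>j\<in>Ou-J. \<Gamma> j (c(e:=c e))) \<le> (\<Sum>j\<in>Ou-J. \<Gamma> j (c(e:=y)))"
      by (rule psi_mono[OF cF eO _ _ ce y _ refl]) (use h1 True in auto)
    have split: "(\<Sum>j\<in>J. \<Gamma> j h) = 1 - (\<Sum>j\<in>Ou-J. \<Gamma> j h)" if "h \<in> F" for h
      using sum1[OF that] sum.subset_diff[OF JO finO, of "\<lambda>j. \<Gamma> j h"] by simp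
    have hF: "c(e:=y) \<in> F" using cF y eO unfolding F_char by auto
    show ?thesis using split[OF hF] split[OF cF] m by simp
  qed
  have main: "\<forall>b. b\<in>F \<longrightarrow> (\<forall>e\<in>J. a e \<le> b e) \<longrightarrow> (\<forall>e\<in>Ou-J. b e \<le> a e) \<longrightarrow>
      {e. a e \<noteq> b e} \<subseteq> S \<longrightarrow> (\<Sum>j\<in>J. \<Gamma> j b) \<le> (\<Sum>j\<in>J. \<Gamma> j a)" if "finite S" for S
    using that
  proof (induction S rule: finite_induct)
    case empty
    show ?case by auto
  next
    case (insert e S)
    show ?case
    proof (intro allI impI)
      fix b assume bF: "b\<in>F" and b1: "\<forall>e\<in>J. a e \<le> b e" and b2: "\<forall>e\<in>Ou-J. b e \<le> a e"
        and bd: "{e. a e \<noteq> b e} \<subseteq> insert e S"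
      show "(\<Sum>j\<in>J. \<Gamma> j b) \<le> (\<Sum>j\<in>J. \<Gamma> j a)"
      proof (cases "a e = b e")
        case True
        then have "{e. a e \<noteq> b e} \<subseteq> S" using bd by auto
        then show ?thesis using insert.IH bF b1 b2 by blast
      next
        case False
        then have eO: "e \<in> Ou" using aF bF unfolding F_char by metis
        define c where "c = b(e := a e)"
        have cF: "c \<in> F" using bF aF eO unfolding F_char c_def by auto
        have c1: "\<forall>e\<in>J. a e \<le> c e" using b1 unfolding c_def by simp
        have c2: "\<forall>e\<in>Ou-J. c e \<le> a e" using b2 unfolding c_def by simp
        have c3: "{e. a e \<noteq> c e} \<subseteq> S" using bd unfolding c_def by auto
        have "(\<Sum>j\<in>J. \<Gamma> j c) \<le> (\<Sum>j\<in>J. \<Gamma> j a)"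
          using insert.IH cF c1 c2 c3 by blast
        moreover have "(\<Sum>j\<in>J. \<Gamma> j (c(e:=b e))) \<le> (\<Sum>j\<in>J. \<Gamma> j c)"
          by (rule step[OF cF eO]) (use bF eO b1 b2 in \<open>auto simp: c_def F_char\<close>)
        moreover have "c(e:=b e) = b" unfolding c_def by auto
        ultimately show ?thesis by simp
      qed
    qed
  qed
  have "{e. a e \<noteq> b e} \<subseteq> Ou" using aF bF unfolding F_char by (smt (verit) mem_Collect_eq subsetI)
  then show ?thesis using main[OF finO] bF hJ hO by blast
qed



lemma node_ineq:
  fixes g gp f fp :: "'e \<Rightarrow> real"
  assumes finO: "finite Ou" and lam: "lam \<ge> 0"
    and gpn: "\<forall>e\<in>Ou. 0 \<le> gp e" and gps: "sum gp Ou = 1"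
    and mP: "(\<Sum>e\<in>{e\<in>Ou. fp e < f e}. g e) \<le> (\<Sum>e\<in>{e\<in>Ou. fp e < f e}. gp e)"
    and mM: "(\<Sum>e\<in>{e\<in>Ou. f e < fp e}. gp e) \<le> (\<Sum>e\<in>{e\<in>Ou. f e < fp e}. g e)"
    and fpe: "\<forall>e\<in>Ou. fp e = lp * gp e"
  shows "(\<Sum>e\<in>Ou. sgn (f e - fp e) * (lam * g e - f e)) \<le> \<bar>lam - lp\<bar> - (\<Sum>e\<in>Ou. \<bar>f e - fp e\<bar>)"
proof -
  define Jp where "Jp = {e\<in>Ou. fp e < f e}"
  define Jm where "Jm = {e\<in>Ou. f e < fp e}"
  define x where "x e = lam * g e - lp * gp e" for e
  have t: "sgn (f e - fp e) * (lam * g e - f e) =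
      ((if fp e < f e then x e else 0) - (if f e < fp e then x e else 0)) - \<bar>f e - fp e\<bar>"
    if "e \<in> Ou" for e
    using fpe that unfolding x_def by (auto simp: sgn_if algebra_simps)
  have "(\<Sum>e\<in>Ou. sgn (f e - fp e) * (lam * g e - f e)) =
      (\<Sum>e\<in>Ou. ((if fp e < f e then x e else 0) - (if f e < fp e then x e else 0)) - \<bar>f e - fp e\<bar>)"
    using t by (rule sum.cong[OF refl])
  also have "\<dots> = (sum x Jp - sum x Jm) - (\<Sum>e\<in>Ou. \<bar>f e - fp e\<bar>)"
    unfolding Jp_def Jm_def sum_subtractf sum.inter_filter[OF finO] by simp
  finally have eq: "(\<Sum>e\<in>Ou. sgn (f e - fp e) * (lam * g e - f e)) =
      (sum x Jp - sum x Jm) - (\<Sum>e\<in>Ou. \<bar>f e - fp e\<bar>)" .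
  define P where "P = sum g Jp"
  define M where "M = sum g Jm"
  define Pp where "Pp = sum gp Jp"
  define Mp where "Mp = sum gp Jm"
  have sx: "sum x Jp - sum x Jm = lam * (P - M) - lp * (Pp - Mp)"
    unfolding x_def P_def M_def Pp_def Mp_def sum_subtractf sum_distrib_left[symmetric]
    by (simp add: algebra_simps)
  have fin: "finite Jp" "finite Jm" using finO unfolding Jp_def Jm_def by auto
  have disj: "Jp \<inter> Jm = {}" unfolding Jp_def Jm_def by auto
  have sub: "Jp \<union> Jm \<subseteq> Ou" unfolding Jp_def Jm_def by auto
  have Ppn: "Pp \<ge> 0" "Mp \<ge> 0" unfolding Pp_def Mp_def using gpn sub by (auto intro!: sum_nonneg)
  have "Pp + Mp = sum gp (Jp \<union> Jm)" unfolding Pp_def Mp_def by (rule sum.union_disjoint[OF fin disj, symmetric])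
  also have "\<dots> \<le> sum gp Ou" by (rule sum_mono2[OF finO sub]) (use gpn in auto)
  finally have PM1: "Pp + Mp \<le> 1" using gps by simp
  have a1: "lam * P \<le> lam * Pp" using mP lam unfolding P_def Pp_def Jp_def by (simp add: mult_left_mono)
  have a2: "lam * Mp \<le> lam * M" using mM lam unfolding M_def Mp_def Jm_def by (simp add: mult_left_mono)
  have "lam * (P - M) - lp * (Pp - Mp) \<le> (lam - lp) * (Pp - Mp)" using a1 a2 by (simp add: algebra_simps)
  also have "\<dots> \<le> \<bar>lam - lp\<bar> * \<bar>Pp - Mp\<bar>" by (metis abs_ge_self abs_mult)
  also have "\<dots> \<le> \<bar>lam - lp\<bar>"
  proof -
    have "\<bar>Pp - Mp\<bar> \<le> 1" using Ppn PM1 by auto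
    then show ?thesis by (simp add: mult_left_le)
  qed
  finally show ?thesis using eq sx by simp
qed



lemma path_facts:
  assumes P: "is_dpath E n p" and ord: "\<forall>(u, v)\<in>E. u < v"
  shows "card {e\<in>set p. fst e = 0} = 1"
    and "0 < v \<Longrightarrow> v < n \<Longrightarrow> card {e\<in>set p. fst e = v} = card {e\<in>set p. snd e = v}"
proof -
  define L where "L = length p"
  have ne: "p \<noteq> []" and sE: "set p \<subseteq> E" and h0: "fst (hd p) = 0" and ln: "snd (last p) = n"
    and ch: "\<And>i. Suc i < L \<Longrightarrow> snd (p ! i) = fst (p ! Suc i)"
    using P unfolding is_dpath_def L_def by auto
  have L0: "L > 0" using ne unfolding L_def by auto
  have lt: "fst (p!i) < snd (p!i)" if "i < L" for i
  proof -
    have "p!i \<in> E" using sE that unfolding L_def by (meson nth_mem subsetD)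
    then show ?thesis using ord by (cases "p!i") auto
  qed
  have step: "fst (p!i) < fst (p!Suc i)" if "Suc i < L" for i
    using lt[of i] ch[OF that] that by auto
  have mono: "fst (p!i) < fst (p!(i + Suc k))" if "i + Suc k < L" for i k
    using that
  proof (induction k)
    case 0 then show ?case using step by simp
  next
    case (Suc k)
    then have "fst (p!i) < fst (p!(i + Suc k))" by simp
    also have "\<dots> < fst (p!(i + Suc (Suc k)))" using step[of "i + Suc k"] Suc.prems by simp
    finally show ?case .
  qed
  have mono': "fst (p!i) < fst (p!j)" if "i < j" "j < L" for i j
    using mono[of i "j - Suc i"] that by simp
  have inj: "inj_on (\<lambda>i. p!i) {i. i < L \<and> Q (p!i)}" for Q
  proof (rule inj_onI)
    fix i j assume "i \<in> {i. i < L \<and> Q (p!i)}" "j \<in> {i. i < L \<and> Q (p!i)}" "p!i = p!j"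
    then show "i = j" using mono'[of i j] mono'[of j i] by (metis linorder_neqE_nat mem_Collect_eq order_less_irrefl)
  qed
  have img: "{e\<in>set p. Q e} = (\<lambda>i. p!i) ` {i. i < L \<and> Q (p!i)}" for Q
  proof (intro equalityI subsetI)
    fix e assume "e \<in> {e\<in>set p. Q e}"
    then obtain i where "i < L" "p!i = e" "Q e" unfolding L_def by (auto simp: in_set_conv_nth)
    then show "e \<in> (\<lambda>i. p!i) ` {i. i < L \<and> Q (p!i)}" by force
  qed (auto simp: L_def)
  have cardeq: "card {e\<in>set p. Q e} = card {i. i < L \<and> Q (p!i)}" for Q
    unfolding img by (rule card_image[OF inj])
  have f0: "fst (p!0) = 0" using h0 ne by (simp add: hd_conv_nth)
  have "{i. i < L \<and> fst (p!i) = 0} = {0}"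
  proof -
    have "i = 0" if "i < L" "fst (p!i) = 0" for i
      using mono'[of 0 i] that f0 by (cases i) auto
    then show ?thesis using L0 f0 by auto
  qed
  then show "card {e\<in>set p. fst e = 0} = 1" unfolding cardeq by simp
  assume v: "0 < v" "v < n"
  have "{i. i < L \<and> fst (p!i) = v} = Suc ` {i. i < L \<and> snd (p!i) = v}"
  proof (intro equalityI subsetI)
    fix i assume i: "i \<in> {i. i < L \<and> fst (p!i) = v}"
    then have "i \<noteq> 0" using f0 v i by (metis (mono_tags, lifting) less_irrefl mem_Collect_eq)
    then obtain k where k: "i = Suc k" by (cases i) auto
    then have "snd (p!k) = v" using ch[of k] i by auto
    then show "i \<in> Suc ` {i. i < L \<and> snd (p!i) = v}" using k i by auto
  next
    fix i assume "i \<in> Suc ` {i. i < L \<and> snd (p!i) = v}"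
    then obtain k where k: "i = Suc k" "k < L" "snd (p!k) = v" by auto
    have "Suc k < L"
    proof (rule ccontr)
      assume "\<not> Suc k < L"
      then have "k = L - 1" using k by auto
      then have "p!k = last p" using ne unfolding L_def by (simp add: last_conv_nth)
      then show False using ln k v by auto
    qed
    then show "i \<in> {i. i < L \<and> fst (p!i) = v}" using ch[of k] k by auto
  qed
  then show "card {e\<in>set p. fst e = v} = card {e\<in>set p. snd e = v}"
    unfolding cardeq by (simp add: card_image)
qed



lemma inv_sign:
  fixes m :: "real \<Rightarrow> real" and c :: ereal
  assumes d: "\<exists>d. continuous_on {0..} d \<and> (\<forall>x\<ge>0. (m has_real_derivative d x) (at x within {0..}))"
    and sm: "strict_mono_on {0..} m" and m0: "m 0 = 0"
    and lim: "((\<lambda>x. ereal (m x)) \<longlongrightarrow> c) at_top"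
    and y0: "0 \<le> y" and yc: "ereal y < c" and r: "0 \<le> r"
  shows "sgn (r - the_inv_into {0..} m y) = sgn (m r - y)"
proof -
  obtain dd where dd: "\<forall>x\<ge>0. (m has_real_derivative dd x) (at x within {0..})" using d by blast
  have "\<forall>x\<in>{0..}. continuous (at x within {0..}) m"
  proof
    fix x :: real assume "x \<in> {0..}"
    then have "(m has_real_derivative dd x) (at x within {0..})" using dd by auto
    then show "continuous (at x within {0..}) m" by (rule DERIV_continuous)
  qed
  then have cont: "continuous_on {0..} m" unfolding continuous_on_eq_continuous_within .
  have "eventually (\<lambda>x. ereal y < ereal (m x)) at_top"
    by (rule order_tendstoD(1)[OF lim yc])
  then obtain N where N: "\<And>x. x \<ge> N \<Longrightarrow> ereal y < ereal (m x)" by (auto simp: eventually_at_top_linorder)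
  define b where "b = max N 0"
  have mb: "y < m b" using N[of b] unfolding b_def by auto
  have "continuous_on {0..b} m" using cont by (rule continuous_on_subset) auto
  then obtain x where x: "0 \<le> x" "x \<le> b" "m x = y"
  proof -
    have b0: "0 \<le> b" unfolding b_def by auto
    have "\<exists>x. 0 \<le> x \<and> x \<le> b \<and> m x = y"
      by (rule IVT'[of m 0 y b]) (use m0 y0 mb b0 \<open>continuous_on {0..b} m\<close> in auto)
    then show ?thesis using that by blast
  qed
  have inj: "inj_on m {0..}" using sm by (rule strict_mono_on_imp_inj_on)
  have yim: "y \<in> m ` {0..}" using x by auto
  define s where "s = the_inv_into {0..} m y"
  have ms: "m s = y" unfolding s_def by (rule f_the_inv_into_f[OF inj yim])
  have s0: "s \<in> {0..}" unfolding s_def by (rule the_inv_into_into[OF inj yim]) auto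
  have "sgn (r - s) = sgn (m r - m s)"
  proof (cases r s rule: linorder_cases)
    case less
    then have "m r < m s" using strict_mono_onD[OF sm _ s0 less] r by auto
    then show ?thesis using less by (simp add: sgn_if)
  next
    case equal then show ?thesis by simp
  next
    case greater
    then have "m s < m r" using strict_mono_onD[OF sm s0 _ greater] r by auto
    then show ?thesis using greater by (simp add: sgn_if)
  qed
  then show ?thesis unfolding s_def[symmetric] using ms by simp
qed



theorem lemma3:
  fixes n :: nat and E :: "(nat \<times> nat) set"
    and \<mu> :: "nat \<times> nat \<Rightarrow> real \<Rightarrow> real" and C :: "nat \<times> nat \<Rightarrow> ereal"
    and G :: "nat \<Rightarrow> (nat \<times> nat \<Rightarrow> real) \<Rightarrow> ((nat \<times> nat) list \<Rightarrow> real) \<Rightarrow> nat \<times> nat \<Rightarrow> real"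
    and \<alpha> :: real and \<rho> :: "nat \<times> nat \<Rightarrow> real" and \<pi> :: "(nat \<times> nat) list \<Rightarrow> real"
  assumes E_sub: "E \<subseteq> {0..n} \<times> {0..n}"
    and E_ord: "\<forall>(u, v)\<in>E. u < v"
    and E_acyclic: "acyclic E"
    and source: "\<forall>v\<in>{0..n}. in_edges E v = {} \<longleftrightarrow> v = 0"
    and sink: "\<forall>v\<in>{0..n}. out_edges E v = {} \<longleftrightarrow> v = n"
    and reach: "\<forall>v\<in>{0..n}. (v, n) \<in> E\<^sup>*"
    and mu_C1: "\<forall>e\<in>E. \<exists>d. continuous_on {0..} d \<and>
                   (\<forall>x\<ge>0. (\<mu> e has_real_derivative d x) (at x within {0..}))"
    and mu_incr: "\<forall>e\<in>E. strict_mono_on {0..} (\<mu> e)"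
    and mu_concave: "\<forall>e\<in>E. \<forall>x\<ge>0. \<forall>y\<ge>0. x \<noteq> y \<longrightarrow> (\<forall>t. 0 < t \<and> t < 1 \<longrightarrow>
                   t * \<mu> e x + (1 - t) * \<mu> e y < \<mu> e (t * x + (1 - t) * y))"
    and mu_zero: "\<forall>e\<in>E. \<mu> e 0 = 0"
    and C_lim: "\<forall>e\<in>E. ((\<lambda>x. ereal (\<mu> e x)) \<longlongrightarrow> C e) at_top"
    and G_simplex: "\<forall>v<n. \<forall>f\<in>Fv E C v. \<forall>p\<in>Pi_set E n C.
                   (\<forall>e\<in>out_edges E v. 0 \<le> G v f p e) \<and> (\<Sum>e\<in>out_edges E v. G v f p e) = 1"
    and G_cont: "\<forall>v<n. \<forall>j\<in>out_edges E v.
                   continuous_on (Fv E C v \<times> Pi_set E n C) (\<lambda>(f, p). G v f p j)"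
    and G_C1: "\<forall>v<n. \<forall>j\<in>out_edges E v. \<forall>e\<in>out_edges E v. \<exists>D.
                   continuous_on (Fv E C v \<times> Pi_set E n C) (\<lambda>(f, p). D f p) \<and>
                   (\<forall>f\<in>Fv E C v. \<forall>p\<in>Pi_set E n C.
                      ((\<lambda>x. G v (f(e := x)) p j) has_real_derivative D f p)
                        (at (f e) within {x. 0 \<le> x \<and> ereal x < C e}))"
    and G_consistent: "\<forall>v<n. \<forall>p\<in>Pi_set E n C. \<forall>e\<in>out_edges E v.
                   (\<Sum>j\<in>out_edges E v. flow_of E n p j) * G v (restr E v (flow_of E n p)) p e
                     = flow_of E n p e"
    and G_coop: "\<forall>v<n. \<forall>p\<in>Pi_set E n C. \<forall>f\<in>Fv E C v. \<forall>j\<in>out_edges E v. \<forall>e\<in>out_edges E v.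
                   j \<noteq> e \<longrightarrow> (\<forall>D. ((\<lambda>x. G v (f(e := x)) p j) has_real_derivative D)
                        (at (f e) within {x. 0 \<le> x \<and> ereal x < C e}) \<longrightarrow> 0 \<le> D)"
    and alpha: "0 < \<alpha>" "\<alpha> < 1"
    and rho_nonneg: "\<forall>e\<in>E. 0 \<le> \<rho> e"
    and f_in: "(\<lambda>e. \<mu> e (\<rho> e)) \<in> Fall E C"
    and pi_in: "\<pi> \<in> Pi_set E n C"
  shows "(\<Sum>e\<in>E. Wgrad \<alpha> E n \<mu> \<rho> \<pi> e * Hfun E G (\<lambda>e. \<mu> e (\<rho> e)) \<pi> e)
           = (\<Sum>v<n. \<alpha> ^ v * (\<Sum>e\<in>out_edges E v.
                 sigma E n \<mu> \<rho> \<pi> e * Hfun E G (\<lambda>e. \<mu> e (\<rho> e)) \<pi> e))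
       \<and> (\<Sum>v<n. \<alpha> ^ v * (\<Sum>e\<in>out_edges E v.
                 sigma E n \<mu> \<rho> \<pi> e * Hfun E G (\<lambda>e. \<mu> e (\<rho> e)) \<pi> e))
           \<le> - (1 - \<alpha>) * Vfun \<alpha> E n (\<lambda>e. \<mu> e (\<rho> e)) \<pi>"
proof -
  define f where "f = (\<lambda>e. \<mu> e (\<rho> e))"
  define fp where "fp = flow_of E n \<pi>"
  define H where "H = Hfun E G f \<pi>"
  define sg where "sg = sigma E n \<mu> \<rho> \<pi>"
  have finE: "finite E" using E_sub by (rule finite_subset) auto
  have sndle: "snd e \<le> n" if "e \<in> E" for e
    using that E_sub by (cases e) auto
  have fstsnd: "fst e < snd e" if "e \<in> E" for e
    using that E_ord by (cases e) auto
  have fstlt: "fst e < n" if "e \<in> E" for e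
    using fstsnd[OF that] sndle[OF that] by simp
  have pi_nonneg: "\<forall>p. 0 \<le> \<pi> p" and pi_sum: "sum \<pi> (paths E n) = 1"
    and pi_lt: "\<forall>e\<in>E. ereal (fp e) < C e"
    using pi_in unfolding Pi_set_def fp_def by auto
  have finP: "finite (paths E n)" using pi_sum by (metis sum.infinite zero_neq_one)
  have fp_nonneg: "0 \<le> fp e" for e
    unfolding fp_def flow_of_def using pi_nonneg by (auto intro!: sum_nonneg)
  have f_nonneg: "\<forall>e\<in>E. 0 \<le> f e" and f_lt: "\<forall>e\<in>E. ereal (f e) < C e"
    using f_in unfolding Fall_def f_def by auto
  have out_sub: "out_edges E v \<subseteq> E" for v unfolding out_edges_def by auto
  have in_sub: "in_edges E v \<subseteq> E" for v unfolding in_edges_def by auto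
  have finout: "finite (out_edges E v)" for v using finE out_sub finite_subset by blast
  have finin: "finite (in_edges E v)" for v using finE in_sub finite_subset by blast
  have sumA: "(\<Sum>e\<in>A. fp e) = (\<Sum>p\<in>paths E n. \<pi> p * card {e\<in>A. e \<in> set p})" if "finite A" for A
  proof -
    have "(\<Sum>e\<in>A. fp e) = (\<Sum>p\<in>paths E n. \<Sum>e\<in>A. if e \<in> set p then \<pi> p else 0)"
      unfolding fp_def flow_of_def by (rule sum.swap)
    also have "\<dots> = (\<Sum>p\<in>paths E n. \<pi> p * card {e\<in>A. e \<in> set p})"
    proof (rule sum.cong[OF refl])
      fix p
      have "(\<Sum>e\<in>A. if e \<in> set p then \<pi> p else 0) = (\<Sum>e\<in>{e\<in>A. e \<in> set p}. \<pi> p)"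
        by (rule sum.inter_filter[OF that, symmetric])
      then show "(\<Sum>e\<in>A. if e \<in> set p then \<pi> p else 0) = \<pi> p * card {e\<in>A. e \<in> set p}" by simp
    qed
    finally show ?thesis .
  qed
  have pathsE: "set p \<subseteq> E" if "p \<in> paths E n" for p using that unfolding paths_def is_dpath_def by auto
  have out_set: "{e\<in>out_edges E v. e \<in> set p} = {e\<in>set p. fst e = v}" if "p \<in> paths E n" for p v
    using pathsE[OF that] unfolding out_edges_def by auto
  have in_set: "{e\<in>in_edges E v. e \<in> set p} = {e\<in>set p. snd e = v}" if "p \<in> paths E n" for p v
    using pathsE[OF that] unfolding in_edges_def by auto
  have cons0: "(\<Sum>e\<in>out_edges E 0. fp e) = 1"
  proof -
    have "(\<Sum>e\<in>out_edges E 0. fp e) = (\<Sum>p\<in>paths E n. \<pi> p * card {e\<in>out_edges E 0. e \<in> set p})"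
      by (rule sumA[OF finout])
    also have "\<dots> = (\<Sum>p\<in>paths E n. \<pi> p)"
    proof (rule sum.cong[OF refl])
      fix p assume p: "p \<in> paths E n"
      have "card {e\<in>out_edges E 0. e \<in> set p} = 1"
        unfolding out_set[OF p] using path_facts(1)[of E n p] p E_ord unfolding paths_def by auto
      then show "\<pi> p * card {e\<in>out_edges E 0. e \<in> set p} = \<pi> p" by simp
    qed
    finally show ?thesis using pi_sum by simp
  qed
  have consv: "(\<Sum>e\<in>out_edges E v. fp e) = (\<Sum>e\<in>in_edges E v. fp e)" if v: "0 < v" "v < n" for v
  proof -
    have "(\<Sum>e\<in>out_edges E v. fp e) = (\<Sum>p\<in>paths E n. \<pi> p * card {e\<in>out_edges E v. e \<in> set p})"
      by (rule sumA[OF finout])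
    also have "\<dots> = (\<Sum>p\<in>paths E n. \<pi> p * card {e\<in>in_edges E v. e \<in> set p})"
    proof (rule sum.cong[OF refl])
      fix p assume p: "p \<in> paths E n"
      have "card {e\<in>out_edges E v. e \<in> set p} = card {e\<in>in_edges E v. e \<in> set p}"
        unfolding out_set[OF p] in_set[OF p] using path_facts(2)[of E n p v] p E_ord v unfolding paths_def by auto
      then show "\<pi> p * card {e\<in>out_edges E v. e \<in> set p} = \<pi> p * card {e\<in>in_edges E v. e \<in> set p}" by simp
    qed
    also have "\<dots> = (\<Sum>e\<in>in_edges E v. fp e)" by (rule sumA[OF finin, symmetric])
    finally show ?thesis .
  qed
  have sg_eq: "sg e = sgn (f e - fp e)" if e: "e \<in> E" for e
  proof -
    have "sgn (\<rho> e - the_inv_into {0..} (\<mu> e) (fp e)) = sgn (\<mu> e (\<rho> e) - fp e)"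
      by (rule inv_sign) (use e mu_C1 mu_incr mu_zero C_lim fp_nonneg pi_lt rho_nonneg in auto)
    then show ?thesis unfolding sg_def sigma_def rho_pi_def fp_def f_def by simp
  qed
  have group: "(\<Sum>e\<in>E. h e) = (\<Sum>v<n. \<Sum>e\<in>out_edges E v. h e)" for h :: "nat \<times> nat \<Rightarrow> real"
  proof -
    have "fst ` E \<subseteq> {..<n}" using fstlt by auto
    from sum.group[OF finE finite_lessThan this, where h=h] show ?thesis unfolding out_edges_def by simp
  qed
  have conj1: "(\<Sum>e\<in>E. Wgrad \<alpha> E n \<mu> \<rho> \<pi> e * H e) = (\<Sum>v<n. \<alpha> ^ v * (\<Sum>e\<in>out_edges E v. sg e * H e))"
  proof -
    have "(\<Sum>e\<in>E. Wgrad \<alpha> E n \<mu> \<rho> \<pi> e * H e) = (\<Sum>v<n. \<Sum>e\<in>out_edges E v. Wgrad \<alpha> E n \<mu> \<rho> \<pi> e * H e)"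
      by (rule group)
    also have "\<dots> = (\<Sum>v<n. \<alpha> ^ v * (\<Sum>e\<in>out_edges E v. sg e * H e))"
      unfolding sum_distrib_left
      by (intro sum.cong refl) (auto simp: Wgrad_def sg_def sigma_def out_edges_def)
    finally show ?thesis .
  qed
  define lam where "lam v = (if v = 0 then 1 else (\<Sum>j\<in>in_edges E v. f j))" for v
  define B where "B v = (if v = 0 then 0 else (\<Sum>j\<in>in_edges E v. \<bar>f j - fp j\<bar>))" for v
  have node: "(\<Sum>e\<in>out_edges E v. sg e * H e) \<le> B v - (\<Sum>e\<in>out_edges E v. \<bar>f e - fp e\<bar>)"
    if v: "v < n" for v
  proof -
    define Ou where "Ou = out_edges E v"
    define lp where "lp = (if v = 0 then 1 else (\<Sum>j\<in>in_edges E v. fp j))"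
    define g where "g e = G v (restr E v f) \<pi> e" for e
    define gp where "gp e = G v (restr E v fp) \<pi> e" for e
    define I where "I e = {x. 0 \<le> x \<and> ereal x < C e}" for e
    have rF: "restr E v f \<in> Fv E C v" using f_nonneg f_lt unfolding Fv_def restr_def by (auto dest: subsetD[OF out_sub])
    have rpF: "restr E v fp \<in> Fv E C v" using fp_nonneg pi_lt unfolding Fv_def restr_def by (auto dest: subsetD[OF out_sub])
    have sOu: "(\<Sum>e\<in>Ou. fp e) = lp"
      unfolding Ou_def lp_def using cons0 consv[of v] v by auto
    have He: "H e = lam v * g e - f e" if "e \<in> Ou" for e
      using that unfolding H_def Hfun_def lam_def g_def Ou_def out_edges_def by (auto simp: Let_def)
    have Fchar: "h \<in> Fv E C v \<longleftrightarrow> (\<forall>e\<in>Ou. h e \<in> I e) \<and> (\<forall>e. e \<notin> Ou \<longrightarrow> h e = 0)" for h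
      unfolding Fv_def Ou_def I_def by auto
    have conv: "y \<in> I e" if "x \<in> I e" "z \<in> I e" "x \<le> y" "y \<le> z" for e x y z
      using that unfolding I_def by (auto intro: le_less_trans[of "ereal y" "ereal z"])
    have sum1: "(\<Sum>j\<in>Ou. G v h \<pi> j) = 1" if "h \<in> Fv E C v" for h
      using G_simplex[rule_format, OF v that pi_in] unfolding Ou_def by (rule conjunct2)
    have der: "\<exists>D\<ge>0. ((\<lambda>x. G v (h(e:=x)) \<pi> j) has_real_derivative D) (at (h e) within I e)"
      if hjF: "h \<in> Fv E C v" and hjO: "j \<in> Ou" and heO: "e \<in> Ou" and hje: "j \<noteq> e" for h j e
    proof -
      obtain D where "\<forall>f\<in>Fv E C v. \<forall>p\<in>Pi_set E n C.
          ((\<lambda>x. G v (f(e := x)) p j) has_real_derivative D f p) (at (f e) within {x. 0 \<le> x \<and> ereal x < C e})"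
        using G_C1[rule_format, OF v hjO[unfolded Ou_def] heO[unfolded Ou_def]] by blast
      then have d: "((\<lambda>x. G v (h(e := x)) \<pi> j) has_real_derivative D h \<pi>) (at (h e) within I e)"
        using hjF pi_in unfolding I_def by blast
      have "0 \<le> D h \<pi>"
        using G_coop[rule_format, OF v pi_in hjF hjO[unfolded Ou_def] heO[unfolded Ou_def] hje] d
        unfolding I_def by blast
      then show ?thesis using d by blast
    qed
    have rOu: "restr E v h e = h e" if "e \<in> Ou" for h e using that unfolding restr_def Ou_def by simp
    have mP: "(\<Sum>e\<in>{e\<in>Ou. fp e < f e}. g e) \<le> (\<Sum>e\<in>{e\<in>Ou. fp e < f e}. gp e)"
      unfolding g_def gp_def
      by (rule coord_mono[where \<Gamma>="\<lambda>j h. G v h \<pi> j" and F="Fv E C v" and I=I and Ou=Ou,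
            OF finout[of v, folded Ou_def] Fchar conv sum1 der _ rpF rF])
         (auto simp: rOu)
    have mM: "(\<Sum>e\<in>{e\<in>Ou. f e < fp e}. gp e) \<le> (\<Sum>e\<in>{e\<in>Ou. f e < fp e}. g e)"
      unfolding g_def gp_def
      by (rule coord_mono[where \<Gamma>="\<lambda>j h. G v h \<pi> j" and F="Fv E C v" and I=I and Ou=Ou,
            OF finout[of v, folded Ou_def] Fchar conv sum1 der _ rF rpF])
         (auto simp: rOu)
    have gpn: "\<forall>e\<in>Ou. 0 \<le> gp e" and gps: "sum gp Ou = 1"
      using G_simplex[rule_format, OF v rpF pi_in] unfolding gp_def Ou_def by auto
    have fpe: "\<forall>e\<in>Ou. fp e = lp * gp e"
      using G_consistent[rule_format, OF v pi_in] sOu unfolding gp_def Ou_def fp_def by auto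
    have lam0: "lam v \<ge> 0" unfolding lam_def using f_nonneg in_sub by (auto intro!: sum_nonneg)
    have "(\<Sum>e\<in>Ou. sgn (f e - fp e) * (lam v * g e - f e)) \<le> \<bar>lam v - lp\<bar> - (\<Sum>e\<in>Ou. \<bar>f e - fp e\<bar>)"
      by (rule node_ineq[OF finout[of v, folded Ou_def] lam0 gpn gps mP mM fpe])
    moreover have "(\<Sum>e\<in>Ou. sg e * H e) = (\<Sum>e\<in>Ou. sgn (f e - fp e) * (lam v * g e - f e))"
    proof (rule sum.cong[OF refl])
      fix e assume e: "e \<in> Ou"
      then have "e \<in> E" using out_sub unfolding Ou_def by blast
      then show "sg e * H e = sgn (f e - fp e) * (lam v * g e - f e)" using He[OF e] sg_eq by simp
    qed
    moreover have "\<bar>lam v - lp\<bar> \<le> B v"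
      unfolding lam_def lp_def B_def
      by (auto simp: sum_subtractf[symmetric] intro: sum_abs)
    ultimately show ?thesis unfolding Ou_def by linarith
  qed
  define d where "d e = \<bar>f e - fp e\<bar>" for e
  have Vg: "Vfun \<alpha> E n f \<pi> = (\<Sum>e\<in>E. \<alpha> ^ fst e * d e)"
  proof -
    have "(\<Sum>e\<in>E. \<alpha> ^ fst e * d e) = (\<Sum>v<n. \<Sum>e\<in>out_edges E v. \<alpha> ^ fst e * d e)" by (rule group)
    also have "\<dots> = Vfun \<alpha> E n f \<pi>"
      unfolding Vfun_def sum_distrib_left d_def fp_def
      by (intro sum.cong refl) (auto simp: out_edges_def)
    finally show ?thesis by simp
  qed
  define c where "c v = (\<Sum>e\<in>in_edges E v. \<alpha> ^ (fst e + 1) * d e)" for v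
  have cn: "c v \<ge> 0" for v unfolding c_def d_def using alpha by (auto intro!: sum_nonneg)
  have Bc: "\<alpha> ^ v * B v \<le> c v" for v
  proof (cases "v = 0")
    case True then show ?thesis using cn by (simp add: B_def)
  next
    case False
    have "\<alpha> ^ v * B v = (\<Sum>e\<in>in_edges E v. \<alpha> ^ v * d e)"
      using False unfolding B_def d_def by (simp add: sum_distrib_left)
    also have "\<dots> \<le> c v" unfolding c_def
    proof (rule sum_mono)
      fix e assume e: "e \<in> in_edges E v"
      then have "fst e + 1 \<le> v" using fstsnd[of e] unfolding in_edges_def by auto
      then have "\<alpha> ^ v \<le> \<alpha> ^ (fst e + 1)" using alpha by (intro power_decreasing) auto
      then show "\<alpha> ^ v * d e \<le> \<alpha> ^ (fst e + 1) * d e" by (rule mult_right_mono) (simp add: d_def)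
    qed
    finally show ?thesis .
  qed
  have sumc: "(\<Sum>v\<le>n. c v) = \<alpha> * (\<Sum>e\<in>E. \<alpha> ^ fst e * d e)"
  proof -
    have "(\<Sum>v\<le>n. c v) = (\<Sum>e\<in>E. \<alpha> ^ (fst e + 1) * d e)"
    proof -
      have "snd ` E \<subseteq> {..n}" using sndle by auto
      from sum.group[OF finE finite_atMost this, where h="\<lambda>e. \<alpha> ^ (fst e + 1) * d e"] show ?thesis
        unfolding c_def in_edges_def by (simp only:)
    qed
    also have "\<dots> = \<alpha> * (\<Sum>e\<in>E. \<alpha> ^ fst e * d e)" by (simp add: sum_distrib_left algebra_simps)
    finally show ?thesis .
  qed
  have "(\<Sum>v<n. \<alpha> ^ v * (\<Sum>e\<in>out_edges E v. sg e * H e))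
      \<le> (\<Sum>v<n. \<alpha> ^ v * (B v - (\<Sum>e\<in>out_edges E v. d e)))"
    by (rule sum_mono) (use node alpha in \<open>auto intro!: mult_left_mono simp: d_def\<close>)
  also have "\<dots> = (\<Sum>v<n. \<alpha> ^ v * B v) - Vfun \<alpha> E n f \<pi>"
    unfolding Vfun_def right_diff_distrib sum_subtractf d_def fp_def ..
  also have "(\<Sum>v<n. \<alpha> ^ v * B v) \<le> (\<Sum>v\<le>n. c v)"
  proof -
    have "(\<Sum>v<n. \<alpha> ^ v * B v) \<le> (\<Sum>v<n. c v)" by (rule sum_mono) (rule Bc)
    also have "\<dots> \<le> (\<Sum>v\<le>n. c v)" by (rule sum_mono2) (use cn in auto)
    finally show ?thesis .
  qed
  finally have "(\<Sum>v<n. \<alpha> ^ v * (\<Sum>e\<in>out_edges E v. sg e * H e)) \<le> - (1 - \<alpha>) * Vfun \<alpha> E n f \<pi>"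
    using sumc Vg by (simp add: algebra_simps)
  then show ?thesis using conj1 unfolding f_def H_def sg_def by simp
qed


end
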